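(* Consider the two-qubit observables $A_1=0\oplus X\oplus0$, $A_2=0\oplus Y\oplus0$, $A_3=0\oplus Z\oplus0$ (block-diagonal in the computational basis $\ket{00},\ket{01},\ket{10},\ket{11}$, acting as the given Pauli matrix on $\mathrm{span}\{\ket{01},\ket{10}\}$ and as $0$ on $\ket{00}$ and $\ket{11}$). Then $\operatorname{vol}L_{\mathrm{SEP}}(A_1,A_2,A_3)/\operatorname{vol}L(A_1,A_2,A_3)=\frac15$ and $\operatorname{vol}L_{\mathrm{SEP}}(A_1,A_2)/\operatorname{vol}L(A_1,A_2)=\frac14$. Consequently $\mu_{2,3}\le\frac15$ and $\mu_{2,2}\le\frac14$.
   Context: $X,Y,Z$ are the Pauli matrices. $L(A_1,\dots,A_k)$ (resp. $L_{\mathrm{SEP}}$) is the set of vectors $(\operatorname{Tr}\rho A_1,\dots,\operatorname{Tr}\rho A_k)$ over all (resp. separable) two-qubit states, vol is $k$-dimensional Euclidean volume, and $\mu_{2,k}$ is the infimum of $\operatorname{vol}L_{\mathrm{SEP}}/\operatorname{vol}L$ over $k$-tuples of two-qubit Hermitian operators with linearly independent traceless parts. *)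

theory Defs
  imports "HOL-Analysis.Analysis"
begin

text \<open>Complex n x n matrices are modelled as complex^'n^'n (real vector space structure
 for convex hulls and real linear independence). Two-qubit operators: complex^4^4 with
 index 0,1,2,3 corresponding to |00>,|01>,|10>,|11>.\<close>

definition herm :: "complex^'n^'n \<Rightarrow> bool" where
  "herm A \<longleftrightarrow> (\<forall>i j. A $ i $ j = cnj (A $ j $ i))"

definition psd :: "complex^'n^'n \<Rightarrow> bool" where
  "psd A \<longleftrightarrow> (\<forall>v::complex^'n.
      (let q = (\<Sum>i\<in>UNIV. \<Sum>j\<in>UNIV. cnj (v $ i) * A $ i $ j * v $ j) in Im q = 0 \<and> 0 \<le> Re q))"

definition density :: "complex^'n^'n \<Rightarrow> bool" where
  "density \<rho> \<longleftrightarrow> herm \<rho> \<and> psd \<rho> \<and> trace \<rho> = 1"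

text \<open>Tensor product of single-qubit operators: index 2a+b of the 4-dim space
 corresponds to |ab>.\<close>
definition hi :: "4 \<Rightarrow> 2" where "hi i = (if i = 0 \<or> i = 1 then 0 else 1)"
definition lo :: "4 \<Rightarrow> 2" where "lo i = (if i = 0 \<or> i = 2 then 0 else 1)"

definition kron :: "complex^2^2 \<Rightarrow> complex^2^2 \<Rightarrow> complex^4^4" where
  "kron a b = (\<chi> i j. a $ hi i $ hi j * b $ lo i $ lo j)"

definition states2q :: "(complex^4^4) set" where
  "states2q = {\<rho>. density \<rho>}"

definition sep_states2q :: "(complex^4^4) set" where
  "sep_states2q = convex hull {kron a b | a b. density a \<and> density b}"

definition expvec :: "('k::finite \<Rightarrow> complex^4^4) \<Rightarrow> complex^4^4 \<Rightarrow> real^'k" where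
  "expvec A \<rho> = (\<chi> i. Re (trace (\<rho> ** A i)))"

definition Ljnr :: "('k::finite \<Rightarrow> complex^4^4) \<Rightarrow> (real^'k) set" where
  "Ljnr A = expvec A ` states2q"

definition Lsep :: "('k::finite \<Rightarrow> complex^4^4) \<Rightarrow> (real^'k) set" where
  "Lsep A = expvec A ` sep_states2q"

definition vol :: "(real^'k::finite) set \<Rightarrow> real" where
  "vol S = measure lebesgue S"

definition traceless_part :: "complex^4^4 \<Rightarrow> complex^4^4" where
  "traceless_part A = A - mat (trace A / 4)"

definition lin_indep_tuple :: "('k::finite \<Rightarrow> complex^4^4) \<Rightarrow> bool" where
  "lin_indep_tuple T \<longleftrightarrow> (\<forall>c::'k \<Rightarrow> real. (\<Sum>i\<in>UNIV. c i *\<^sub>R T i) = 0 \<longrightarrow> (\<forall>i. c i = 0))"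

definition mu2 :: "'k::finite itself \<Rightarrow> real" where
  "mu2 _ = Inf {vol (Lsep A) / vol (Ljnr A) | A :: 'k \<Rightarrow> complex^4^4.
                  (\<forall>i. herm (A i)) \<and> lin_indep_tuple (\<lambda>i. traceless_part (A i))}"

definition A1 :: "complex^4^4" where
  "A1 = (\<chi> i j. if i = 1 \<and> j = 2 then 1 else if i = 2 \<and> j = 1 then 1 else 0)"
definition A2 :: "complex^4^4" where
  "A2 = (\<chi> i j. if i = 1 \<and> j = 2 then -\<i> else if i = 2 \<and> j = 1 then \<i> else 0)"
definition A3 :: "complex^4^4" where
  "A3 = (\<chi> i j. if i = 1 \<and> j = 1 then 1 else if i = 2 \<and> j = 2 then -1 else 0)"

definition triple :: "3 \<Rightarrow> complex^4^4" where
  "triple i = (if i = 0 then A1 else if i = 1 then A2 else A3)"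
definition pair :: "2 \<Rightarrow> complex^4^4" where
  "pair i = (if i = 0 then A1 else A2)"

end

theory Submission
  imports Defs
begin

lemma sum_two_supp:
  fixes g :: "'n::finite \<Rightarrow> 'a::comm_monoid_add"
  assumes "i \<noteq> j" "\<And>k. k \<noteq> i \<Longrightarrow> k \<noteq> j \<Longrightarrow> g k = 0"
  shows "sum g UNIV = g i + g j"
proof -
  have "sum g UNIV = sum g {i,j}"
    by (rule sum.mono_neutral_right) (use assms in auto)
  then show ?thesis using assms by simp
qed

lemma qf2:
  fixes x y c :: complex and a d :: real
  assumes "a \<ge> 0" "d \<ge> 0" "(cmod c)\<^sup>2 \<le> a*d"
  shows "Im (cnj x* of_real a* x + cnj x*c* y + cnj y*cnj c* x + cnj y* of_real d* y) = 0 \<and>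
         0 \<le> Re (cnj x* of_real a* x + cnj x*c* y + cnj y*cnj c* x + cnj y* of_real d* y)"
proof
  show "Im (cnj x* of_real a* x + cnj x*c* y + cnj y*cnj c* x + cnj y* of_real d* y) = 0"
    by (simp add: algebra_simps)
next
  let ?R = "Re (cnj x* of_real a* x + cnj x*c* y + cnj y*cnj c* x + cnj y* of_real d* y)"
  show "0 \<le> ?R"
  proof (cases "a = 0")
    case True
    then have "(cmod c)\<^sup>2 \<le> 0" using assms by simp
    then have "c = 0" by simp
    then show ?thesis using True assms by (simp add: algebra_simps)
  next
    case False
    then have a: "a > 0" using assms by simp
    have id: "a * ?R = (cmod (of_real a * x + c * y))\<^sup>2 + (a*d - (cmod c)\<^sup>2) * (cmod y)\<^sup>2"
      by (simp only: cmod_power2) (simp add: algebra_simps power2_eq_square)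
    have "0 \<le> (cmod (of_real a * x + c * y))\<^sup>2 + (a*d - (cmod c)\<^sup>2) * (cmod y)\<^sup>2"
      using assms by simp
    then have "0 \<le> a * ?R" using id by simp
    then show ?thesis using a by (simp add: zero_le_mult_iff)
  qed
qed

lemma psd_two:
  fixes M :: "complex^'n^'n"
  assumes ij: "i \<noteq> j" and supp: "\<And>k l. k \<notin> {i,j} \<or> l \<notin> {i,j} \<Longrightarrow> M$k$l = 0"
    and ea: "M$i$i = of_real a" and ed: "M$j$j = of_real d" and eh: "M$j$i = cnj (M$i$j)"
    and "a \<ge> 0" "d \<ge> 0" "(cmod (M$i$j))\<^sup>2 \<le> a*d"
  shows "psd M"
  unfolding psd_def Let_def
proof
  fix v :: "complex^'n"
  have inner: "\<And>k. (\<Sum>l\<in>UNIV. cnj (v$k) * M$k$l * v$l) = cnj (v$k)*M$k$i* v$i + cnj(v$k)*M$k$j* v$j"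
    by (rule sum_two_supp[OF ij]) (simp add: supp)
  have "(\<Sum>k\<in>UNIV. \<Sum>l\<in>UNIV. cnj (v$k) * M$k$l * v$l) = (\<Sum>k\<in>UNIV. cnj (v$k)*M$k$i* v$i + cnj(v$k)*M$k$j* v$j)"
    by (simp add: inner)
  also have "\<dots> = (cnj (v$i)*M$i$i* v$i + cnj(v$i)*M$i$j* v$j) + (cnj (v$j)*M$j$i* v$i + cnj(v$j)*M$j$j* v$j)"
    by (rule sum_two_supp[OF ij]) (simp add: supp)
  also have "\<dots> = cnj (v$i) * of_real a * v$i + cnj (v$i) * (M$i$j) * v$j + cnj (v$j) * cnj (M$i$j) * v$i + cnj (v$j) * of_real d * v$j"
    by (simp add: ea ed eh)
  finally show "Im (\<Sum>k\<in>UNIV. \<Sum>l\<in>UNIV. cnj (v$k) * M$k$l * v$l) = 0 \<and> 0 \<le> Re (\<Sum>k\<in>UNIV. \<Sum>l\<in>UNIV. cnj (v$k) * M$k$l * v$l)"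
    using qf2[OF assms(6-8)] by simp
qed

definition vec2 :: "'n::finite \<Rightarrow> 'n \<Rightarrow> complex \<Rightarrow> complex \<Rightarrow> complex^'n" where
  "vec2 i j x y = (\<chi> k. if k = i then x else if k = j then y else 0)"

lemma qform_vec2:
  fixes M :: "complex^'n^'n"
  assumes ij: "i \<noteq> j"
  shows "(\<Sum>k\<in>UNIV. \<Sum>l\<in>UNIV. cnj ((vec2 i j x y)$k) * M$k$l * (vec2 i j x y)$l)
     = cnj x*M$i$i* x + cnj x*M$i$j* y + cnj y*M$j$i* x + cnj y*M$j$j* y"
proof -
  let ?v = "vec2 i j x y"
  have inner: "\<And>k. (\<Sum>l\<in>UNIV. cnj (?v$k) * M$k$l * ?v$l) = cnj (?v$k)*M$k$i* x + cnj(?v$k)*M$k$j* y"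
    using ij by (subst sum_two_supp[OF ij]) (auto simp: vec2_def)
  have "(\<Sum>k\<in>UNIV. \<Sum>l\<in>UNIV. cnj (?v$k) * M$k$l * ?v$l) = (\<Sum>k\<in>UNIV. cnj (?v$k)*M$k$i* x + cnj(?v$k)*M$k$j* y)"
    by (simp add: inner)
  also have "\<dots> = (cnj x*M$i$i* x + cnj x*M$i$j* y) + (cnj y*M$j$i* x + cnj y*M$j$j* y)"
    using ij by (subst sum_two_supp[OF ij]) (auto simp: vec2_def)
  finally show ?thesis by (simp add: add.assoc)
qed

lemma psd_Q:
  fixes M :: "complex^'n^'n"
  assumes P: "psd M" and ij: "i \<noteq> j"
  shows "Im (cnj x*M$i$i* x + cnj x*M$i$j* y + cnj y*M$j$i* x + cnj y*M$j$j* y) = 0 \<and>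
        0 \<le> Re (cnj x*M$i$i* x + cnj x*M$i$j* y + cnj y*M$j$i* x + cnj y*M$j$j* y)"
proof -
  have "Im (\<Sum>k\<in>UNIV. \<Sum>l\<in>UNIV. cnj ((vec2 i j x y)$k) * M$k$l * (vec2 i j x y)$l) = 0 \<and>
        0 \<le> Re (\<Sum>k\<in>UNIV. \<Sum>l\<in>UNIV. cnj ((vec2 i j x y)$k) * M$k$l * (vec2 i j x y)$l)"
    using P unfolding psd_def Let_def by blast
  then show ?thesis unfolding qform_vec2[OF ij] .
qed

lemma qf_conv:
  fixes c :: complex and ar dr :: real
  assumes Q2: "\<And>x y. 0 \<le> Re (cnj x * of_real ar * x + cnj x * c * y + cnj y * cnj c * x + cnj y * of_real dr * y)"
    and ar0: "ar \<ge> 0" and dr0: "dr \<ge> 0"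
  shows "(cmod c)\<^sup>2 \<le> ar * dr"
proof (cases "dr = 0")
  case False
  then have dp: "dr > 0" using dr0 by simp
  have "0 \<le> Re (cnj (of_real dr) * of_real ar * of_real dr + cnj (of_real dr) * c * (- cnj c)
         + cnj (- cnj c) * cnj c * of_real dr + cnj (- cnj c) * of_real dr * (- cnj c))"
    by (rule Q2)
  also have "\<dots> = dr * (ar * dr - (cmod c)\<^sup>2)"
    by (simp only: cmod_power2) (simp add: algebra_simps power2_eq_square)
  finally have "0 \<le> ar * dr - (cmod c)\<^sup>2" using dp by (simp add: zero_le_mult_iff)
  then show ?thesis by simp
next
  case True
  have "0 \<le> Re (cnj (- c) * of_real ar * (- c) + cnj (- c) * c * of_real (ar+1)
         + cnj (of_real (ar+1)) * cnj c * (- c) + cnj (of_real (ar+1)) * of_real dr * of_real (ar+1))"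
    by (rule Q2)
  also have "\<dots> = - ((ar + 2) * (cmod c)\<^sup>2)"
    using True by (simp only: cmod_power2) (simp add: algebra_simps power2_eq_square)
  finally have "0 \<le> - ((ar + 2) * (cmod c)\<^sup>2)" .
  moreover have "0 \<le> (ar + 2) * (cmod c)\<^sup>2" using ar0 by simp
  ultimately have "(ar + 2) * (cmod c)\<^sup>2 = 0" by linarith
  then have "(cmod c)\<^sup>2 = 0" using ar0 by simp
  then show ?thesis using True by simp
qed

lemma psd_entries:
  fixes M :: "complex^'n^'n"
  assumes P: "psd M" and H: "herm M" and ij: "i \<noteq> j"
  shows "Im (M$i$i) = 0" "Re (M$i$i) \<ge> 0" "(cmod (M$i$j))\<^sup>2 \<le> Re (M$i$i) * Re (M$j$j)"
proof -
  have "Im (cnj 1*M$i$i* 1 + cnj 1*M$i$j* 0 + cnj 0*M$j$i* 1 + cnj 0*M$j$j* 0) = 0 \<and>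
        0 \<le> Re (cnj 1*M$i$i* 1 + cnj 1*M$i$j* 0 + cnj 0*M$j$i* 1 + cnj 0*M$j$j* 0)"
    by (rule psd_Q[OF P ij])
  then have ii: "Im (M$i$i) = 0 \<and> Re (M$i$i) \<ge> 0" by simp
  have "Im (cnj 0*M$i$i* 0 + cnj 0*M$i$j* 1 + cnj 1*M$j$i* 0 + cnj 1*M$j$j* 1) = 0 \<and>
        0 \<le> Re (cnj 0*M$i$i* 0 + cnj 0*M$i$j* 1 + cnj 1*M$j$i* 0 + cnj 1*M$j$j* 1)"
    by (rule psd_Q[OF P ij])
  then have jj: "Im (M$j$j) = 0 \<and> Re (M$j$j) \<ge> 0" by simp
  show "Im (M$i$i) = 0" "Re (M$i$i) \<ge> 0" using ii by auto
  have hj: "M$j$i = cnj (M$i$j)" using H[unfolded herm_def, rule_format, of j i] .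
  obtain ar where ar: "ar = Re (M$i$i)" by blast
  obtain dr where dr: "dr = Re (M$j$j)" by blast
  have ea: "M$i$i = of_real ar" using ii ar by (simp add: complex_eq_iff)
  have ed: "M$j$j = of_real dr" using jj dr by (simp add: complex_eq_iff)
  have "(cmod (M$i$j))\<^sup>2 \<le> ar * dr"
  proof (rule qf_conv)
    fix x y
    have "0 \<le> Re (cnj x*M$i$i* x + cnj x*M$i$j* y + cnj y*M$j$i* x + cnj y*M$j$j* y)"
      by (rule conjunct2[OF psd_Q[OF P ij]])
    then show "0 \<le> Re (cnj x * of_real ar * x + cnj x * M$i$j * y + cnj y * cnj (M$i$j) * x + cnj y * of_real dr * y)"
      unfolding ea ed hj .
  qed (use ii jj ar dr in auto)
  then show "(cmod (M$i$j))\<^sup>2 \<le> Re (M$i$i) * Re (M$j$j)" using ar dr by simp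
qed

definition Xf :: "complex^4^4 \<Rightarrow> real" where "Xf \<rho> = Re (\<rho>$1$2 + \<rho>$2$1)"
definition Yf :: "complex^4^4 \<Rightarrow> real" where "Yf \<rho> = Re (\<i> * \<rho>$1$2 - \<i> * \<rho>$2$1)"
definition Zf :: "complex^4^4 \<Rightarrow> real" where "Zf \<rho> = Re (\<rho>$1$1 - \<rho>$2$2)"

lemma tr1: "trace (\<rho> ** A1) = \<rho>$1$2 + \<rho>$2$1"
  by (simp add: trace_def matrix_matrix_mult_def A1_def sum_4)
lemma tr2: "trace (\<rho> ** A2) = \<i> * \<rho>$1$2 - \<i> * \<rho>$2$1"
  by (simp add: trace_def matrix_matrix_mult_def A2_def sum_4 algebra_simps)
lemma tr3: "trace (\<rho> ** A3) = \<rho>$1$1 - \<rho>$2$2"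
  by (simp add: trace_def matrix_matrix_mult_def A3_def sum_4)

lemma expvec_triple: "expvec triple \<rho> $ 0 = Xf \<rho>" "expvec triple \<rho> $ 1 = Yf \<rho>" "expvec triple \<rho> $ 2 = Zf \<rho>"
  by (simp_all add: expvec_def triple_def tr1 tr2 tr3 Xf_def Yf_def Zf_def)

lemma expvec_pair: "expvec pair \<rho> $ 0 = Xf \<rho>" "expvec pair \<rho> $ 1 = Yf \<rho>"
  by (simp_all add: expvec_def pair_def tr1 tr2 Xf_def Yf_def)

lemma four_eq0: "(4::4) = 0" by simp
lemma two_eq0: "(2::2) = 0" by simp
lemma three_eq0: "(3::3) = 0" by simp

lemma trace4: "trace (M::complex^4^4) = M$0$0 + M$1$1 + M$2$2 + M$3$3"
  by (simp add: trace_def sum_4 algebra_simps four_eq0)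

lemma trace2: "trace (M::complex^2^2) = M$0$0 + M$1$1"
  by (simp add: trace_def sum_2 algebra_simps two_eq0)

lemma herm_conj: "herm M \<Longrightarrow> M$j$i = cnj (M$i$j)"
  unfolding herm_def by (erule allE[of _ j], erule allE[of _ i])

lemma XY_cmod:
  assumes "\<rho>$2$1 = cnj (\<rho>$1$2)"
  shows "cmod (Complex (Xf \<rho>) (Yf \<rho>)) = 2 * cmod (\<rho>$1$2)"
proof -
  have "Xf \<rho> = 2 * Re (\<rho>$1$2)" "Yf \<rho> = - 2 * Im (\<rho>$1$2)"
    using assms by (simp_all add: Xf_def Yf_def)
  then have "Complex (Xf \<rho>) (Yf \<rho>) = 2 * cnj (\<rho>$1$2)" by (simp add: complex_eq_iff)
  then show ?thesis by (simp add: norm_mult)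
qed

lemma state_bound:
  assumes D: "density \<rho>"
  shows "(Xf \<rho>)\<^sup>2 + (Yf \<rho>)\<^sup>2 + (Zf \<rho>)\<^sup>2 \<le> 1"
proof -
  have H: "herm \<rho>" and P: "psd \<rho>" and T: "trace \<rho> = 1" using D by (auto simp: density_def)
  have e12: "(cmod (\<rho>$1$2))\<^sup>2 \<le> Re (\<rho>$1$1) * Re (\<rho>$2$2)" "Re (\<rho>$1$1) \<ge> 0"
    using psd_entries[OF P H, of 1 2] by auto
  have e2: "Re (\<rho>$2$2) \<ge> 0" using psd_entries[OF P H, of 2 1] by auto
  have e0: "Re (\<rho>$0$0) \<ge> 0" using psd_entries[OF P H, of 0 1] by auto
  have e3: "Re (\<rho>$3$3) \<ge> 0" using psd_entries[OF P H, of 3 1] by auto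
  have "Re (trace \<rho>) = 1" using T by simp
  then have tr: "Re (\<rho>$0$0) + Re (\<rho>$1$1) + Re (\<rho>$2$2) + Re (\<rho>$3$3) = 1" by (simp add: trace4)
  have c: "\<rho>$2$1 = cnj (\<rho>$1$2)" by (rule herm_conj[OF H])
  have "(Xf \<rho>)\<^sup>2 + (Yf \<rho>)\<^sup>2 = (cmod (Complex (Xf \<rho>) (Yf \<rho>)))\<^sup>2"
    by (simp add: cmod_power2)
  also have "\<dots> = 4 * (cmod (\<rho>$1$2))\<^sup>2" using XY_cmod[OF c] by (simp add: power2_eq_square)
  finally have xy: "(Xf \<rho>)\<^sup>2 + (Yf \<rho>)\<^sup>2 \<le> 4 * (Re (\<rho>$1$1) * Re (\<rho>$2$2))" using e12 by simp
  have z: "Zf \<rho> = Re (\<rho>$1$1) - Re (\<rho>$2$2)" by (simp add: Zf_def)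
  define a where "a = Re (\<rho>$1$1)"
  define d where "d = Re (\<rho>$2$2)"
  have ad: "a \<ge> 0" "d \<ge> 0" "a + d \<le> 1" using e12 e2 e0 e3 tr unfolding a_def d_def by linarith+
  have "(Xf \<rho>)\<^sup>2 + (Yf \<rho>)\<^sup>2 + (Zf \<rho>)\<^sup>2 \<le> 4 * (a * d) + (a - d)\<^sup>2"
    using xy z unfolding a_def d_def by simp
  also have "\<dots> = (a + d)\<^sup>2" by (simp add: power2_eq_square algebra_simps)
  also have "\<dots> \<le> 1" using ad by (simp add: power_le_one)
  finally show ?thesis .
qed

definition mkstate :: "real \<Rightarrow> real \<Rightarrow> real \<Rightarrow> complex^4^4" where
  "mkstate x y z = (\<chi> i j. if i = 1 \<and> j = 1 then of_real ((1+z)/2) else if i = 2 \<and> j = 2 then of_real ((1-z)/2)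
      else if i = 1 \<and> j = 2 then Complex (x/2) (-y/2) else if i = 2 \<and> j = 1 then Complex (x/2) (y/2) else 0)"

lemma mkstate:
  assumes "x\<^sup>2 + y\<^sup>2 + z\<^sup>2 \<le> 1"
  shows "density (mkstate x y z)" "Xf (mkstate x y z) = x" "Yf (mkstate x y z) = y" "Zf (mkstate x y z) = z"
proof -
  let ?M = "mkstate x y z"
  have z1: "z\<^sup>2 \<le> 1" using assms zero_le_power2[of x] zero_le_power2[of y] by linarith
  then have zb: "-1 \<le> z" "z \<le> 1" using abs_le_square_iff[of z 1] by auto
  have "herm ?M" unfolding herm_def by (simp add: forall_4 four_eq0 mkstate_def complex_eq_iff)
  moreover have "psd ?M"
  proof (rule psd_two[of 1 2 _ "(1+z)/2" "(1-z)/2"])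
    show "(cmod (?M$1$2))\<^sup>2 \<le> (1+z)/2 * ((1-z)/2)"
    proof -
      have "(cmod (?M$1$2))\<^sup>2 = (x\<^sup>2 + y\<^sup>2)/4"
        by (simp only: cmod_power2) (simp add: mkstate_def power_divide)
      then show ?thesis using assms by (simp add: field_simps power2_eq_square)
    qed
  qed (use zb in \<open>auto simp: mkstate_def complex_eq_iff\<close>)
  moreover have "trace ?M = 1" by (simp add: trace4 mkstate_def complex_eq_iff field_simps)
  ultimately show "density ?M" by (simp add: density_def)
  show "Xf ?M = x" "Yf ?M = y" "Zf ?M = z" by (simp_all add: Xf_def Yf_def Zf_def mkstate_def field_simps)
qed

lemma kron_entries: "(kron a b)$1$1 = a$0$0 * b$1$1" "(kron a b)$2$2 = a$1$1 * b$0$0"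
  "(kron a b)$1$2 = a$0$1 * b$1$0" "(kron a b)$2$1 = a$1$0 * b$0$1"
  by (simp_all add: kron_def hi_def lo_def)

lemma ineqC:
  fixes p p' q q' \<alpha> \<beta> :: real
  assumes "p \<ge> 0" "p' \<ge> 0" "q \<ge> 0" "q' \<ge> 0" "p + p' = 1" "q + q' = 1" "\<alpha> \<ge> 0" "\<beta> \<ge> 0"
    "\<alpha>\<^sup>2 \<le> p * p'" "\<beta>\<^sup>2 \<le> q * q'"
  shows "4 * (\<alpha> * \<beta>) \<le> 1 - (p * q' - p' * q)\<^sup>2"
proof -
  have id: "1 - (p * q' - p' * q)\<^sup>2 = (p' + q) * (p + q')"
  proof -
    have e1: "p' = 1 - p" and e2: "q' = 1 - q" using assms by auto
    show ?thesis unfolding e1 e2 by (simp add: power2_eq_square algebra_simps)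
  qed
  have h1: "4 * (p' * q) \<le> (p' + q)\<^sup>2"
  proof -
    have "(p' + q)\<^sup>2 - 4 * (p' * q) = (p' - q)\<^sup>2" by (simp add: power2_eq_square algebra_simps)
    then show ?thesis using zero_le_power2[of "p' - q"] by linarith
  qed
  have h2: "4 * (p * q') \<le> (p + q')\<^sup>2"
  proof -
    have "(p + q')\<^sup>2 - 4 * (p * q') = (p - q')\<^sup>2" by (simp add: power2_eq_square algebra_simps)
    then show ?thesis using zero_le_power2[of "p - q'"] by linarith
  qed
  have ab: "\<alpha>\<^sup>2 * \<beta>\<^sup>2 \<le> (p * p') * (q * q')"
    by (rule mult_mono) (use assms in auto)
  have "(4 * (\<alpha> * \<beta>))\<^sup>2 = 16 * (\<alpha>\<^sup>2 * \<beta>\<^sup>2)" by (simp add: power2_eq_square)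
  also have "\<dots> \<le> 16 * ((p * p') * (q * q'))" using ab by simp
  also have "\<dots> = (4 * (p' * q)) * (4 * (p * q'))" by simp
  also have "\<dots> \<le> (p' + q)\<^sup>2 * (p + q')\<^sup>2"
    by (rule mult_mono[OF h1 h2]) (use assms in auto)
  also have "\<dots> = ((p' + q) * (p + q'))\<^sup>2" by (simp add: power_mult_distrib)
  finally have "(4 * (\<alpha> * \<beta>))\<^sup>2 \<le> ((p' + q) * (p + q'))\<^sup>2" .
  then have "4 * (\<alpha> * \<beta>) \<le> (p' + q) * (p + q')"
    by (rule power2_le_imp_le) (use assms in auto)
  then show ?thesis using id by simp
qed

lemma prod_bound:
  assumes Da: "density a" and Db: "density b"
  shows "cmod (Complex (Xf (kron a b)) (Yf (kron a b))) \<le> (1 - (Zf (kron a b))\<^sup>2)/2"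
proof -
  have Ha: "herm a" and Pa: "psd a" and Ta: "trace a = 1" using Da by (auto simp: density_def)
  have Hb: "herm b" and Pb: "psd b" and Tb: "trace b = 1" using Db by (auto simp: density_def)
  have c: "(kron a b)$2$1 = cnj ((kron a b)$1$2)"
    by (simp add: kron_entries herm_conj[OF Ha, of 1 0] herm_conj[OF Hb, of 0 1])
  have a01: "(cmod (a$0$1))\<^sup>2 \<le> Re (a$0$0) * Re (a$1$1)" "Im (a$0$0) = 0" "Re (a$0$0) \<ge> 0"
    using psd_entries[OF Pa Ha, of 0 1] by auto
  have a11: "Im (a$1$1) = 0" "Re (a$1$1) \<ge> 0" using psd_entries[OF Pa Ha, of 1 0] by auto
  have b10: "(cmod (b$1$0))\<^sup>2 \<le> Re (b$1$1) * Re (b$0$0)" "Im (b$1$1) = 0" "Re (b$1$1) \<ge> 0"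
    using psd_entries[OF Pb Hb, of 1 0] by auto
  have b00: "Im (b$0$0) = 0" "Re (b$0$0) \<ge> 0" using psd_entries[OF Pb Hb, of 0 1] by auto
  have ta: "Re (a$0$0) + Re (a$1$1) = 1" using arg_cong[OF Ta, of Re] by (simp add: trace2)
  have tb: "Re (b$0$0) + Re (b$1$1) = 1" using arg_cong[OF Tb, of Re] by (simp add: trace2)
  have z: "Zf (kron a b) = Re (a$0$0) * Re (b$1$1) - Re (a$1$1) * Re (b$0$0)"
    using a01 a11 b10 b00 by (simp add: Zf_def kron_entries)
  have "4 * (cmod (a$0$1) * cmod (b$1$0)) \<le> 1 - (Re (a$0$0) * Re (b$1$1) - Re (a$1$1) * Re (b$0$0))\<^sup>2"
    by (rule ineqC) (use a01 a11 b10 b00 ta tb in \<open>auto simp: mult.commute\<close>)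
  moreover have "cmod (Complex (Xf (kron a b)) (Yf (kron a b))) = 2 * (cmod (a$0$1) * cmod (b$1$0))"
    using XY_cmod[OF c] by (simp add: kron_entries norm_mult)
  ultimately show ?thesis using z by simp
qed

lemma UNIV2_01: "(k::2) = 0 \<or> k = 1"
  using exhaust_2[of k] by (auto simp: two_eq0)

lemma mkprod:
  assumes A: "cmod (Complex x y) \<le> (1 - z\<^sup>2)/2"
  shows "\<exists>a b. density a \<and> density b \<and> Xf (kron a b) = x \<and> Yf (kron a b) = y \<and> Zf (kron a b) = z"
proof -
  have "0 \<le> (1 - z\<^sup>2)/2" by (rule order_trans[OF norm_ge_zero A])
  then have z1: "z\<^sup>2 \<le> 1" by simp
  then have zb: "-1 \<le> z" "z \<le> 1" using abs_le_square_iff[of z 1] by auto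
  define s where "s = sqrt (1 - z\<^sup>2) / 2"
  have s0: "s \<ge> 0" unfolding s_def using z1 by simp
  have s2: "s\<^sup>2 = (1 - z\<^sup>2)/4" unfolding s_def using z1 by (simp add: power_divide)
  define c where "c = cnj (Complex x y) / 2"
  have cm: "cmod c = cmod (Complex x y) / 2" unfolding c_def by (simp add: norm_divide)
  have cs: "cmod c \<le> s\<^sup>2" using A cm s2 by simp
  define u where "u = c / of_real s"
  have us: "u * of_real s = c \<and> cmod u \<le> s"
  proof (cases "s = 0")
    case True
    then have "c = 0" using cs by simp
    then show ?thesis using True by (simp add: u_def)
  next
    case False
    then have sp: "s > 0" using s0 by simp
    have "cmod u = cmod c / s" unfolding u_def using sp by (simp add: norm_divide)
    also have "\<dots> \<le> s\<^sup>2 / s" using cs sp by (simp add: divide_right_mono)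
    also have "\<dots> = s" by (simp add: power2_eq_square)
    finally show ?thesis using False by (simp add: u_def)
  qed
  define p where "p = (1 + z)/2"
  define q where "q = (1 - z)/2"
  have pq: "p * (1 - p) = s\<^sup>2" "q * (1 - q) = s\<^sup>2" unfolding p_def q_def s2
    by (simp_all add: field_simps power2_eq_square)
  define a :: "complex^2^2" where "a = (\<chi> i j. if i = 0 then (if j = 0 then of_real p else u) else (if j = 0 then cnj u else of_real (1 - p)))"
  define b :: "complex^2^2" where "b = (\<chi> i j. if i = 0 then (if j = 0 then of_real q else of_real s) else (if j = 0 then of_real s else of_real (1 - q)))"
  have Da: "density a"
  proof -
    have "herm a" unfolding herm_def by (simp add: forall_2 two_eq0 a_def)
    moreover have "psd a"
    proof (rule psd_two[of 0 1 _ p "1 - p"])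
      have "(cmod u)\<^sup>2 \<le> s\<^sup>2" using us norm_ge_zero[of u] by (intro power_mono) auto
      then show "(cmod (a$0$1))\<^sup>2 \<le> p * (1 - p)" using pq by (simp add: a_def)
    qed (use zb UNIV2_01 in \<open>auto simp: a_def p_def\<close>)
    moreover have "trace a = 1" by (simp add: trace2 a_def)
    ultimately show ?thesis by (simp add: density_def)
  qed
  have Db: "density b"
  proof -
    have "herm b" unfolding herm_def by (simp add: forall_2 two_eq0 b_def)
    moreover have "psd b"
    proof (rule psd_two[of 0 1 _ q "1 - q"])
      show "(cmod (b$0$1))\<^sup>2 \<le> q * (1 - q)" using pq s0 by (simp add: b_def)
    qed (use zb UNIV2_01 in \<open>auto simp: b_def q_def\<close>)
    moreover have "trace b = 1" by (simp add: trace2 b_def)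
    ultimately show ?thesis by (simp add: density_def)
  qed
  have k12: "(kron a b)$1$2 = c" using us by (simp add: kron_entries a_def b_def)
  have k21: "(kron a b)$2$1 = cnj c"
  proof -
    have "(kron a b)$2$1 = cnj (u * of_real s)" by (simp add: kron_entries a_def b_def)
    then show ?thesis using us by simp
  qed
  have "Xf (kron a b) = x" unfolding Xf_def k12 k21 c_def by simp
  moreover have "Yf (kron a b) = y" unfolding Yf_def k12 k21 c_def by simp
  moreover have "Zf (kron a b) = z"
    by (simp add: Zf_def kron_entries a_def b_def p_def q_def field_simps)
  ultimately show ?thesis using Da Db by blast
qed

lemma norm3: "norm (p::real^3) = sqrt ((p$0)\<^sup>2 + (p$1)\<^sup>2 + (p$2)\<^sup>2)"
  by (simp add: norm_vec_def L2_set_def sum_3 three_eq0 ac_simps)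

lemma norm2: "norm (p::real^2) = cmod (Complex (p$0) (p$1))"
  by (simp add: norm_vec_def L2_set_def sum_2 two_eq0 cmod_def ac_simps)

lemma linear_expvec: "linear (expvec A)"
proof (rule linearI)
  fix x y :: "complex^4^4"
  show "expvec A (x + y) = expvec A x + expvec A y"
    by (simp add: expvec_def vec_eq_iff trace_def matrix_matrix_mult_def sum.distrib distrib_right)
next
  fix c :: real and x :: "complex^4^4"
  show "expvec A (c *\<^sub>R x) = c *\<^sub>R expvec A x"
    by (simp add: expvec_def vec_eq_iff trace_def matrix_matrix_mult_def scaleR_sum_right sum_distrib_left)
qed

definition S3 :: "(real^3) set" where
  "S3 = {p. cmod (Complex (p$0) (p$1)) \<le> (1 - (p$2)\<^sup>2)/2}"

lemma vec3_eq: "(p::real^3) = q \<longleftrightarrow> p$0 = q$0 \<and> p$1 = q$1 \<and> p$2 = q$2"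
  by (auto simp: vec_eq_iff forall_3 three_eq0)

lemma vec2_eq: "(p::real^2) = q \<longleftrightarrow> p$0 = q$0 \<and> p$1 = q$1"
  by (auto simp: vec_eq_iff forall_2 two_eq0)

lemma Ljnr_triple: "Ljnr triple = cball 0 1"
proof
  show "Ljnr triple \<subseteq> cball 0 1"
  proof
    fix p assume "p \<in> Ljnr triple"
    then obtain \<rho> where D: "density \<rho>" and p: "p = expvec triple \<rho>"
      by (auto simp: Ljnr_def states2q_def)
    have "(p$0)\<^sup>2 + (p$1)\<^sup>2 + (p$2)\<^sup>2 \<le> 1" using state_bound[OF D] p by (simp add: expvec_triple)
    then show "p \<in> cball 0 1" by (simp add: norm3)
  qed
next
  show "cball 0 1 \<subseteq> Ljnr triple"
  proof
    fix p :: "real^3" assume "p \<in> cball 0 1"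
    then have h: "(p$0)\<^sup>2 + (p$1)\<^sup>2 + (p$2)\<^sup>2 \<le> 1" by (simp add: norm3)
    note m = mkstate[OF h]
    have "p = expvec triple (mkstate (p$0) (p$1) (p$2))" using m by (simp add: vec3_eq expvec_triple)
    then show "p \<in> Ljnr triple" using m by (auto simp: Ljnr_def states2q_def)
  qed
qed

lemma Ljnr_pair: "Ljnr pair = cball 0 1"
proof
  show "Ljnr pair \<subseteq> cball 0 1"
  proof
    fix p assume "p \<in> Ljnr pair"
    then obtain \<rho> where D: "density \<rho>" and p: "p = expvec pair \<rho>"
      by (auto simp: Ljnr_def states2q_def)
    have "(Xf \<rho>)\<^sup>2 + (Yf \<rho>)\<^sup>2 \<le> 1" using state_bound[OF D] zero_le_power2[of "Zf \<rho>"]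
      by linarith
    then have "(p$0)\<^sup>2 + (p$1)\<^sup>2 \<le> 1" using p by (simp add: expvec_pair)
    then show "p \<in> cball 0 1" by (simp add: norm2 cmod_def)
  qed
next
  show "cball 0 1 \<subseteq> Ljnr pair"
  proof
    fix p :: "real^2" assume "p \<in> cball 0 1"
    then have h: "(p$0)\<^sup>2 + (p$1)\<^sup>2 + 0\<^sup>2 \<le> 1" by (simp add: norm2 cmod_def)
    note m = mkstate[OF h]
    have "p = expvec pair (mkstate (p$0) (p$1) 0)" using m by (simp add: vec2_eq expvec_pair)
    then show "p \<in> Ljnr pair" using m by (auto simp: Ljnr_def states2q_def)
  qed
qed

lemma convex_S3: "convex S3"
  unfolding convex_def S3_def
proof (intro ballI allI impI, simp only: mem_Collect_eq)
  fix x y :: "real^3" and u v :: real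
  assume x: "cmod (Complex (x$0) (x$1)) \<le> (1 - (x$2)\<^sup>2)/2"
     and y: "cmod (Complex (y$0) (y$1)) \<le> (1 - (y$2)\<^sup>2)/2"
     and uv: "0 \<le> u" "0 \<le> v" "u + v = 1"
  have "Complex ((u *\<^sub>R x + v *\<^sub>R y)$0) ((u *\<^sub>R x + v *\<^sub>R y)$1)
        = u *\<^sub>R Complex (x$0) (x$1) + v *\<^sub>R Complex (y$0) (y$1)"
    by (simp add: complex_eq_iff)
  then have "cmod (Complex ((u *\<^sub>R x + v *\<^sub>R y)$0) ((u *\<^sub>R x + v *\<^sub>R y)$1))
        \<le> u * cmod (Complex (x$0) (x$1)) + v * cmod (Complex (y$0) (y$1))"
    using norm_triangle_ineq[of "u *\<^sub>R Complex (x$0) (x$1)" "v *\<^sub>R Complex (y$0) (y$1)"] uv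
    by simp
  also have "\<dots> \<le> u * ((1 - (x$2)\<^sup>2)/2) + v * ((1 - (y$2)\<^sup>2)/2)"
    using x y uv by (intro add_mono mult_left_mono) auto
  also have "\<dots> \<le> (1 - ((u *\<^sub>R x + v *\<^sub>R y)$2)\<^sup>2)/2"
  proof -
    have v: "v = 1 - u" using uv by simp
    have "u * ((1 - (x$2)\<^sup>2)/2) + v * ((1 - (y$2)\<^sup>2)/2) - (1 - ((u *\<^sub>R x + v *\<^sub>R y)$2)\<^sup>2)/2
          = - (u * v * (x$2 - y$2)\<^sup>2) / 2"
      unfolding v by (simp add: power2_eq_square algebra_simps divide_simps)
    moreover have "0 \<le> u * v * (x$2 - y$2)\<^sup>2" using uv by simp
    ultimately show ?thesis by linarith
  qed
  finally show "cmod (Complex ((u *\<^sub>R x + v *\<^sub>R y)$0) ((u *\<^sub>R x + v *\<^sub>R y)$1))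
        \<le> (1 - ((u *\<^sub>R x + v *\<^sub>R y)$2)\<^sup>2)/2" .
qed

lemma Lsep_hull: "Lsep A = convex hull (expvec A ` {kron a b | a b. density a \<and> density b})"
  unfolding Lsep_def sep_states2q_def by (rule convex_hull_linear_image[OF linear_expvec])

lemma kron_sep: "density a \<Longrightarrow> density b \<Longrightarrow> kron a b \<in> sep_states2q"
  unfolding sep_states2q_def by (rule hull_inc) blast

lemma Lsep_triple: "Lsep triple = S3"
proof
  show "Lsep triple \<subseteq> S3"
    unfolding Lsep_hull
  proof (rule hull_minimal[where S=convex, OF _ convex_S3])
    show "expvec triple ` {kron a b |a b. density a \<and> density b} \<subseteq> S3"
      using prod_bound by (auto simp: S3_def expvec_triple)
  qed
next
  show "S3 \<subseteq> Lsep triple"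
  proof
    fix p assume "p \<in> S3"
    then have "cmod (Complex (p$0) (p$1)) \<le> (1 - (p$2)\<^sup>2)/2" by (simp add: S3_def)
    from mkprod[OF this] obtain a b where ab: "density a" "density b"
      "Xf (kron a b) = p$0" "Yf (kron a b) = p$1" "Zf (kron a b) = p$2" by blast
    have "p = expvec triple (kron a b)" using ab by (simp add: vec3_eq expvec_triple)
    then show "p \<in> Lsep triple" unfolding Lsep_def using kron_sep[OF ab(1,2)] by blast
  qed
qed

lemma Lsep_pair: "Lsep pair = cball 0 (1/2)"
proof
  show "Lsep pair \<subseteq> cball 0 (1/2)"
    unfolding Lsep_hull
  proof (rule hull_minimal[where S=convex, OF _ convex_cball])
    show "expvec pair ` {kron a b |a b. density a \<and> density b} \<subseteq> cball 0 (1/2)"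
    proof clarify
      fix a b :: "complex^2^2" assume ab: "density a" "density b"
      have "cmod (Complex (Xf (kron a b)) (Yf (kron a b))) \<le> (1 - (Zf (kron a b))\<^sup>2)/2"
        by (rule prod_bound[OF ab])
      also have "\<dots> \<le> 1/2" by simp
      finally show "expvec pair (kron a b) \<in> cball 0 (1/2)" by (simp add: norm2 expvec_pair)
    qed
  qed
next
  show "cball 0 (1/2) \<subseteq> Lsep pair"
  proof
    fix p :: "real^2" assume "p \<in> cball 0 (1/2)"
    then have "cmod (Complex (p$0) (p$1)) \<le> (1 - 0\<^sup>2)/2" by (simp add: norm2)
    from mkprod[OF this] obtain a b where ab: "density a" "density b"
      "Xf (kron a b) = p$0" "Yf (kron a b) = p$1" by blast
    have "p = expvec pair (kron a b)" using ab by (simp add: vec2_eq expvec_pair)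
    then show "p \<in> Lsep pair" unfolding Lsep_def using kron_sep[OF ab(1,2)] by blast
  qed
qed

lemma vol_cball3: "vol (cball (0::real^3) 1) = 4/3 * pi"
proof -
  have "vol (cball (0::real^3) 1) = measure lborel (cball (0::real^3) 1)"
    unfolding vol_def by (rule measure_completion) simp
  also have "\<dots> = unit_ball_vol 3" using content_cball[of 1 "0::real^3"] by simp
  also have "\<dots> = 4/3 * pi" by (simp add: eval_unit_ball_vol)
  finally show ?thesis .
qed
lemma vol_cball2: "r \<ge> 0 \<Longrightarrow> vol (cball (0::real^2) r) = pi * r^2"
proof -
  assume r: "r \<ge> 0"
  have "vol (cball (0::real^2) r) = measure lborel (cball (0::real^2) r)"
    unfolding vol_def by (rule measure_completion) simp
  also have "\<dots> = unit_ball_vol 2 * r^2" using content_cball[OF r, of "0::real^2"] by simp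
  also have "\<dots> = pi * r^2" by (simp add: eval_unit_ball_vol)
  finally show ?thesis .
qed

lemma poly_integral:
  "((\<lambda>y::real. pi/4 * (1 - y\<^sup>2)\<^sup>2) has_integral (4/15 * pi)) {-1..1}"
proof -
  define F where "F y = pi/4 * (y - 2/3 * y^3 + y^5/5)" for y :: real
  have d: "(F has_vector_derivative (pi/4 * (1 - x\<^sup>2)\<^sup>2)) (at x within {-1..1})" for x
  proof -
    have "(F has_real_derivative (pi/4 * (1 - 2/3 * (3 * x^2) + (5 * x^4)/5))) (at x within {-1..1})"
      unfolding F_def by (auto intro!: derivative_eq_intros)
    moreover have "pi/4 * (1 - 2/3 * (3 * x^2) + (5 * x^4)/5) = pi/4 * (1 - x\<^sup>2)\<^sup>2"
      by (simp add: power2_eq_square algebra_simps power4_eq_xxxx)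
    ultimately show ?thesis by (simp add: has_real_derivative_iff_has_vector_derivative)
  qed
  have "((\<lambda>y::real. pi/4 * (1 - y\<^sup>2)\<^sup>2) has_integral (F 1 - F (-1))) {-1..1}"
    by (rule fundamental_theorem_of_calculus) (use d in auto)
  moreover have "F 1 - F (-1) = 4/15 * pi" by (simp add: F_def)
  ultimately show ?thesis by simp
qed

lemma nn_poly: "(\<integral>\<^sup>+ y. ennreal (indicator {-1..1} y * (pi/4 * (1 - y\<^sup>2)\<^sup>2)) \<partial>lborel) = ennreal (4/15 * pi)"
proof -
  have "(\<integral>\<^sup>+ y. ennreal (pi/4 * (1 - y\<^sup>2)\<^sup>2) * indicator {-1..1} y \<partial>lborel) = ennreal (4/15 * pi)"
    by (rule nn_integral_has_integral_lebesgue'[OF _ poly_integral]) simp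
  moreover have "(\<integral>\<^sup>+ y. ennreal (indicator {-1..1} y * (pi/4 * (1 - y\<^sup>2)\<^sup>2)) \<partial>lborel)
      = (\<integral>\<^sup>+ y. ennreal (pi/4 * (1 - y\<^sup>2)\<^sup>2) * indicator {-1..1} y \<partial>lborel)"
    by (rule nn_integral_cong) (auto simp: indicator_def)
  ultimately show ?thesis by simp
qed

lemma Basis3: "(Basis :: (real^3) set) = {axis 0 1, axis 1 1, axis 2 1}"
proof -
  have "(Basis :: (real^3) set) = (\<Union>i. {axis i 1})" by (simp add: Basis_vec_def)
  also have "\<dots> = {axis 0 1, axis 1 1, axis 2 1}"
    using exhaust_3 by (auto simp: three_eq0) (metis three_eq0)
  finally show ?thesis .
qed

lemma phi_comp:
  fixes f :: "real^3 \<Rightarrow> real"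
  shows "(\<Sum>b\<in>Basis. f b *\<^sub>R b) $ k = f (axis k 1)"
proof -
  have "(\<Sum>b\<in>Basis. f b *\<^sub>R b) $ k = (\<Sum>b\<in>Basis. f b *\<^sub>R b) \<bullet> axis k 1" by (rule cart_eq_inner_axis)
  also have "\<dots> = f (axis k 1)"
    by (simp add: inner_sum_left inner_Basis if_distrib cong: if_cong)
  finally show ?thesis .
qed

lemma closed_S3: "closed S3"
  unfolding S3_def by (intro closed_Collect_le continuous_intros) auto

lemma emeasure_S3: "emeasure lborel S3 = ennreal (4/15 * pi)"
proof -
  define e0 where "e0 = (axis 0 1 :: real^3)"
  define e1 where "e1 = (axis 1 1 :: real^3)"
  define e2 where "e2 = (axis 2 1 :: real^3)"
  define R where "R = {e0, e1}"
  have ne: "e0 \<noteq> e1" "e2 \<noteq> e0" "e2 \<noteq> e1" by (simp_all add: e0_def e1_def e2_def axis_eq_axis)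
  have B: "(Basis :: (real^3) set) = insert e2 R" using Basis3 by (auto simp: R_def e0_def e1_def e2_def)
  have R2: "e2 \<notin> R" "finite R" "card R = 2" using ne by (auto simp: R_def)
  interpret product_sigma_finite "\<lambda>_::real^3. (lborel :: real measure)" by standard
  have S3b: "S3 \<in> sets borel" using closed_S3 by simp
  define \<phi> where "\<phi> = (\<lambda>f::real^3 \<Rightarrow> real. \<Sum>b\<in>Basis. f b *\<^sub>R b)"
  have "(lborel :: (real^3) measure) = distr (Pi\<^sub>M Basis (\<lambda>_. lborel)) borel \<phi>"
    unfolding \<phi>_def by (rule lborel_eq)
  then have "emeasure lborel S3 = emeasure (distr (Pi\<^sub>M Basis (\<lambda>_. lborel)) borel \<phi>) S3" by simp
  also have "\<dots> = emeasure (Pi\<^sub>M Basis (\<lambda>_. lborel)) (\<phi> -` S3 \<inter> space (Pi\<^sub>M Basis (\<lambda>_. lborel)))"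
    using S3b by (subst emeasure_distr) (auto simp: \<phi>_def)
  also have "\<phi> -` S3 = {f. sqrt ((f e0)\<^sup>2 + (f e1)\<^sup>2) \<le> (1 - (f e2)\<^sup>2)/2}"
  proof -
    have comp: "\<phi> f $ k = f (axis k 1)" for f k unfolding \<phi>_def by (rule phi_comp)
    show ?thesis by (auto simp: S3_def comp cmod_def e0_def e1_def e2_def)
  qed
  also note B
  finally have step1: "emeasure lborel S3 = emeasure (Pi\<^sub>M (insert e2 R) (\<lambda>_. lborel))
      ({f. sqrt ((f e0)\<^sup>2 + (f e1)\<^sup>2) \<le> (1 - (f e2)\<^sup>2)/2} \<inter> space (Pi\<^sub>M (insert e2 R) (\<lambda>_. lborel)))" .
  have meas: "{f. sqrt ((f e0)\<^sup>2 + (f e1)\<^sup>2) \<le> (1 - (f e2)\<^sup>2)/2} \<inter> space (Pi\<^sub>M (insert e2 R) (\<lambda>_. lborel))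
     \<in> sets (Pi\<^sub>M (insert e2 R) (\<lambda>_. lborel))"
  proof -
    have i: "e0 \<in> insert e2 R" "e1 \<in> insert e2 R" "e2 \<in> insert e2 R" by (auto simp: R_def)
    have "{f. sqrt ((f e0)\<^sup>2 + (f e1)\<^sup>2) \<le> (1 - (f e2)\<^sup>2)/2} \<inter> space (Pi\<^sub>M (insert e2 R) (\<lambda>_. lborel))
       = {f \<in> space (Pi\<^sub>M (insert e2 R) (\<lambda>_. lborel)). sqrt ((f e0)\<^sup>2 + (f e1)\<^sup>2) \<le> (1 - (f e2)\<^sup>2)/2}" by auto
    also have "\<dots> \<in> sets (Pi\<^sub>M (insert e2 R) (\<lambda>_. lborel))"
      using i by measurable
    finally show ?thesis .
  qed
  have "emeasure (Pi\<^sub>M (insert e2 R) (\<lambda>_. lborel))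
      ({f. sqrt ((f e0)\<^sup>2 + (f e1)\<^sup>2) \<le> (1 - (f e2)\<^sup>2)/2} \<inter> space (Pi\<^sub>M (insert e2 R) (\<lambda>_. lborel)))
    = nn_integral (Pi\<^sub>M (insert e2 R) (\<lambda>_. lborel))
      (indicator ({f. sqrt ((f e0)\<^sup>2 + (f e1)\<^sup>2) \<le> (1 - (f e2)\<^sup>2)/2} \<inter> space (Pi\<^sub>M (insert e2 R) (\<lambda>_. lborel))))"
    using meas by (subst nn_integral_indicator) auto
  also have "\<dots> = (\<integral>\<^sup>+ y. \<integral>\<^sup>+ x. indicator ({f. sqrt ((f e0)\<^sup>2 + (f e1)\<^sup>2) \<le> (1 - (f e2)\<^sup>2)/2} \<inter>
        space (Pi\<^sub>M (insert e2 R) (\<lambda>_. lborel))) (x(e2 := y)) \<partial>Pi\<^sub>M R (\<lambda>_. lborel) \<partial>lborel)"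
    using R2 meas by (subst product_nn_integral_insert_rev) (auto simp del: Int_iff)
  also have "\<dots> = (\<integral>\<^sup>+ (y::real). \<integral>\<^sup>+ x. indicator ({f. sqrt (\<Sum>i\<in>R. (f i)\<^sup>2) \<le> (1 - y\<^sup>2)/2} \<inter>
        space (Pi\<^sub>M R (\<lambda>_. lborel))) x \<partial>Pi\<^sub>M R (\<lambda>_. lborel) \<partial>lborel)"
  proof (intro nn_integral_cong, goal_cases)
    case (1 y x)
    have "(\<Sum>i\<in>R. (x i)\<^sup>2) = (x e0)\<^sup>2 + (x e1)\<^sup>2"
      using ne by (simp add: R_def)
    then show ?case using 1 R2 ne
      by (auto simp: indicator_def space_PiM PiE_def extensional_def R_def)
  qed
  also have "\<dots> = (\<integral>\<^sup>+ (y::real). emeasure (Pi\<^sub>M R (\<lambda>_. lborel))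
        ({f. sqrt (\<Sum>i\<in>R. (f i)\<^sup>2) \<le> (1 - y\<^sup>2)/2} \<inter> space (Pi\<^sub>M R (\<lambda>_. lborel))) \<partial>lborel)"
    using R2 by (intro nn_integral_cong, subst nn_integral_indicator) auto
  also have "\<dots> = (\<integral>\<^sup>+ y. ennreal (indicator {-1..1} y * (pi/4 * (1 - y\<^sup>2)\<^sup>2)) \<partial>lborel)"
  proof (intro nn_integral_cong_AE)
    have "AE y in lborel. y \<notin> {-1, 1::real}"
      by (intro AE_not_in countable_imp_null_set_lborel) auto
    then show "AE y in lborel. emeasure (Pi\<^sub>M R (\<lambda>_. lborel))
        ({f. sqrt (\<Sum>i\<in>R. (f i)\<^sup>2) \<le> (1 - y\<^sup>2)/2} \<inter> space (Pi\<^sub>M R (\<lambda>_. lborel)))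
       = ennreal (indicator {-1..1} y * (pi/4 * (1 - y\<^sup>2)\<^sup>2))"
    proof eventually_elim
      case (elim y)
      show ?case
      proof (cases "\<bar>y\<bar> < 1")
        case True
        then have y2: "y\<^sup>2 < 1" by (simp add: abs_square_less_1)
        have "emeasure (Pi\<^sub>M R (\<lambda>_. lborel))
            ({f. sqrt (\<Sum>i\<in>R. (f i)\<^sup>2) \<le> (1 - y\<^sup>2)/2} \<inter> space (Pi\<^sub>M R (\<lambda>_. lborel)))
          = ennreal (unit_ball_vol (real (card R)) * ((1 - y\<^sup>2)/2) ^ card R)"
          using R2 y2 by (intro emeasure_cball_aux) auto
        also have "unit_ball_vol (real (card R)) * ((1 - y\<^sup>2)/2) ^ card R = pi/4 * (1 - y\<^sup>2)\<^sup>2"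
          using R2 by (simp add: eval_unit_ball_vol power_divide)
        finally have eqn: "emeasure (Pi\<^sub>M R (\<lambda>_. lborel))
            ({f. sqrt (\<Sum>i\<in>R. (f i)\<^sup>2) \<le> (1 - y\<^sup>2)/2} \<inter> space (Pi\<^sub>M R (\<lambda>_. lborel)))
          = ennreal (pi/4 * (1 - y\<^sup>2)\<^sup>2)" .
        have "y \<in> {-1..1}" using True by (simp add: abs_less_iff)
        then show ?thesis using eqn by (simp add: indicator_def)
      next
        case False
        have "\<bar>y\<bar> \<noteq> 1" using elim by (auto simp: abs_if split: if_splits)
        then have "\<bar>y\<bar> > 1" using False by simp
        then have "1 < \<bar>y\<bar>^2" by (intro one_less_power) auto
        then have y2: "1 < y\<^sup>2" by (simp only: power2_abs)
        have nn: "sqrt (\<Sum>i\<in>R. (f i)\<^sup>2) \<ge> 0" for f :: "real^3 \<Rightarrow> real" by (simp add: sum_nonneg)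
        have neg: "(1 - y\<^sup>2)/2 < 0" using y2 by simp
        { fix f :: "real^3 \<Rightarrow> real" assume "sqrt (\<Sum>i\<in>R. (f i)\<^sup>2) \<le> (1 - y\<^sup>2)/2"
          then have False using nn[of f] neg by linarith }
        then have E: "{f. sqrt (\<Sum>i\<in>R. (f i)\<^sup>2) \<le> (1 - y\<^sup>2)/2} = {}" by auto
        have "y \<notin> {-1..1}" using \<open>\<bar>y\<bar> > 1\<close> by (auto simp: abs_if split: if_splits)
        then show ?thesis using E by simp
      qed
    qed
  qed
  also have "\<dots> = ennreal (4/15 * pi)" by (rule nn_poly)
  finally show ?thesis using step1 by simp
qed

lemma vol_S3: "vol S3 = 4/15 * pi"
proof -
  have "vol S3 = measure lborel S3" unfolding vol_def using closed_S3 by (intro measure_completion) simp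
  also have "\<dots> = 4/15 * pi" using emeasure_S3 by (simp add: measure_def)
  finally show ?thesis .
qed

lemma herm_A: "herm A1" "herm A2" "herm A3"
  unfolding herm_def by (simp_all add: forall_4 four_eq0 A1_def A2_def A3_def complex_eq_iff)

lemma trace_A: "trace A1 = 0" "trace A2 = 0" "trace A3 = 0"
  by (simp_all add: trace4 A1_def A2_def A3_def)

lemma tl_A: "traceless_part A1 = A1" "traceless_part A2 = A2" "traceless_part A3 = A3"
  by (simp_all add: traceless_part_def trace_A mat_def vec_eq_iff)

lemma ratio_nonneg: "0 \<le> vol (Lsep A) / vol (Ljnr A)"
  unfolding vol_def by (simp add: divide_nonneg_nonneg)

lemma triple_mem: "(\<forall>i. herm (triple i)) \<and> lin_indep_tuple (\<lambda>i. traceless_part (triple i))"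
proof
  show "\<forall>i. herm (triple i)" by (simp add: triple_def herm_A)
  have tl: "(\<lambda>i. traceless_part (triple i)) = triple" by (auto simp: triple_def tl_A)
  show "lin_indep_tuple (\<lambda>i. traceless_part (triple i))"
    unfolding tl lin_indep_tuple_def
  proof (intro allI impI)
    fix c :: "3 \<Rightarrow> real" and i :: 3
    assume "(\<Sum>i\<in>UNIV. c i *\<^sub>R triple i) = 0"
    then have s: "c 1 *\<^sub>R A2 + c 2 *\<^sub>R A3 + c 0 *\<^sub>R A1 = 0" by (simp add: sum_3 triple_def three_eq0)
    have e12: "(c 1 *\<^sub>R A2 + c 2 *\<^sub>R A3 + c 0 *\<^sub>R A1) $ 1 $ 2 = 0" using s by simp
    have e11: "(c 1 *\<^sub>R A2 + c 2 *\<^sub>R A3 + c 0 *\<^sub>R A1) $ 1 $ 1 = 0" using s by simp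
    from e12 have "c 0 = 0 \<and> c 1 = 0" by (simp add: A1_def A2_def A3_def complex_eq_iff)
    moreover from e11 have "c 2 = 0" by (simp add: A1_def A2_def A3_def complex_eq_iff)
    ultimately show "c i = 0" using exhaust_3[of i] by (auto simp: three_eq0)
  qed
qed

lemma pair_mem: "(\<forall>i. herm (pair i)) \<and> lin_indep_tuple (\<lambda>i. traceless_part (pair i))"
proof
  show "\<forall>i. herm (pair i)" by (simp add: pair_def herm_A)
  have tl: "(\<lambda>i. traceless_part (pair i)) = pair" by (auto simp: pair_def tl_A)
  show "lin_indep_tuple (\<lambda>i. traceless_part (pair i))"
    unfolding tl lin_indep_tuple_def
  proof (intro allI impI)
    fix c :: "2 \<Rightarrow> real" and i :: 2
    assume "(\<Sum>i\<in>UNIV. c i *\<^sub>R pair i) = 0"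
    then have s: "c 1 *\<^sub>R A2 + c 0 *\<^sub>R A1 = 0" by (simp add: sum_2 pair_def two_eq0)
    have e12: "(c 1 *\<^sub>R A2 + c 0 *\<^sub>R A1) $ 1 $ 2 = 0" using s by simp
    from e12 have "c 0 = 0 \<and> c 1 = 0" by (simp add: A1_def A2_def complex_eq_iff)
    then show "c i = 0" using exhaust_2[of i] by (auto simp: two_eq0)
  qed
qed

lemma ratio3: "vol (Lsep triple) / vol (Ljnr triple) = 1/5"
  unfolding Lsep_triple Ljnr_triple vol_S3 vol_cball3 by simp

lemma ratio2: "vol (Lsep pair) / vol (Ljnr pair) = 1/4"
  unfolding Lsep_pair Ljnr_pair vol_cball2[of 1, simplified] vol_cball2[of "1/2", simplified] by (simp add: power2_eq_square)

theorem mainTheorem10: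
  shows "vol (Lsep triple) / vol (Ljnr triple) = 1/5
       \<and> vol (Lsep pair) / vol (Ljnr pair) = 1/4
       \<and> mu2 TYPE(3) \<le> 1/5
       \<and> mu2 TYPE(2) \<le> 1/4"
proof (intro conjI)
  show "vol (Lsep triple) / vol (Ljnr triple) = 1/5" by (rule ratio3)
  show "vol (Lsep pair) / vol (Ljnr pair) = 1/4" by (rule ratio2)
  show "mu2 TYPE(3) \<le> 1/5"
    unfolding mu2_def
  proof (rule cInf_lower)
    show "1/5 \<in> {vol (Lsep A) / vol (Ljnr A) | A :: 3 \<Rightarrow> complex^4^4.
                  (\<forall>i. herm (A i)) \<and> lin_indep_tuple (\<lambda>i. traceless_part (A i))}"
      by (rule CollectI, rule exI[of _ triple]) (simp only: ratio3 triple_mem simp_thms)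
    show "bdd_below {vol (Lsep A) / vol (Ljnr A) | A :: 3 \<Rightarrow> complex^4^4.
                  (\<forall>i. herm (A i)) \<and> lin_indep_tuple (\<lambda>i. traceless_part (A i))}"
      by (rule bdd_belowI[of _ 0]) (auto simp: ratio_nonneg)
  qed
  show "mu2 TYPE(2) \<le> 1/4"
    unfolding mu2_def
  proof (rule cInf_lower)
    show "1/4 \<in> {vol (Lsep A) / vol (Ljnr A) | A :: 2 \<Rightarrow> complex^4^4.
                  (\<forall>i. herm (A i)) \<and> lin_indep_tuple (\<lambda>i. traceless_part (A i))}"
      by (rule CollectI, rule exI[of _ pair]) (simp only: ratio2 pair_mem simp_thms)
    show "bdd_below {vol (Lsep A) / vol (Ljnr A) | A :: 2 \<Rightarrow> complex^4^4.
                  (\<forall>i. herm (A i)) \<and> lin_indep_tuple (\<lambda>i. traceless_part (A i))}"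
      by (rule bdd_belowI[of _ 0]) (auto simp: ratio_nonneg)
  qed
qed

end
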